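(* For each $n\in\mathbb N$, the subgroup $K_n^{\mathbb C}=\{a\in\mathcal B^{\mathbb C}_{TM}\mid a(\tau)=0\ \text{for all }\tau\in\mathcal T\text{ with }|\tau|\le n\}$ is a closed normal Lie subgroup of $\mathcal B^{\mathbb C}_{TM}$, and $K_n=K_n^{\mathbb C}\cap\mathcal B_{TM}$ is a closed normal subgroup of $\mathcal B_{TM}$. Both are split submanifolds of finite codimension (each is a closed affine subspace $e+\{a\in M^*_{\mathbb K}\mid a(\tau)=0\ \forall\,|\tau|\le n\}$ of the respective group).
   Context: $\mathcal T$ is the set of rooted trees (at least one vertex), $\mathcal T_0=\mathcal T\cup\{\emptyset\}$, $|\tau|$ the number of vertices. The complex tame Butcher group $\mathcal B^{\mathbb C}_{TM}$ is the set of $a\colon\mathcal T_0\to\mathbb C$ with $a(\emptyset)=1$ and $|a(\tau)|\le CK^{|\tau|}$ for some $C,K>0$ and all $\tau\in\mathcal T$, with product $(a\cdot b)(\tau)=\sum_{s\in\mathrm{OST}(\tau)}b(s_\tau)\prod_{\theta\in\tau\setminus s}a(\theta)$ (sum over ordered subtrees $s$: vertex subsets connected in $\tau$ containing the root if nonempty; $s_\tau$ the induced tree; $\tau\setminus s$ the remaining forest) and unit $e$; $\mathcal B_{TM}$ is its real-valued subgroup. For $\mathbb K\in\{\mathbb R,\mathbb C\}$, $M^*_{\mathbb K}=\{a\in\bigcup_k\mathbb K^{\mathcal T_0}(\omega_k)\mid a(\emptyset)=0\}$ with the inductive limit topology of the Banach spaces $\mathbb K^{\mathcal T_0}(\omega_k)=\{a\mid\sup_\tau|a(\tau)|2^{-k|\tau|}<\infty\}$;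 the groups are analytic Lie groups modelled on $M^*_{\mathbb K}$ via the global chart $a\mapsto a-e$. *)

theory Defs
  imports "HOL-Analysis.Analysis" "HOL-Library.Multiset" "HOL-Library.Poly_Mapping"
          "HOL-Algebra.Coset"
begin

datatype tree = Node "tree multiset"

primrec tsize :: "tree \<Rightarrow> nat" where
  "tsize (Node M) = 1 + sum_mset (image_mset tsize M)"

text \<open>Elements of T_0: None is the empty tree, Some t a rooted tree.\<close>

text \<open>For a tree t, the coefficient of the monomial S (a multiset of trees) in
  subtree_gen a t is the sum, over all ordered subtrees s of t containing the root
  whose induced tree s_t is Node S, of the product of a over the remaining forest.
  A child c of the root either is dropped (then c belongs to the forest, weight a(c))
  or contributes a nonempty ordered subtree of c (containing c's root).\<close>

primrec subtree_gen :: "(tree option \<Rightarrow> 'k::comm_ring_1) \<Rightarrow> tree \<Rightarrow> (tree multiset \<Rightarrow>\<^sub>0 'k)" where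
  "subtree_gen a (Node M) =
     prod_mset (image_mset (\<lambda>c. Poly_Mapping.single {#} (a (Some c))
        + (\<Sum>S\<in>Poly_Mapping.keys (subtree_gen a c). Poly_Mapping.single {#Node S#} (Poly_Mapping.lookup (subtree_gen a c) S))) M)"

text \<open>Butcher product (a . b)(tau) = sum over ordered subtrees s of b(s_tau) times the
  product of a over tau \ s. The empty subtree contributes b(empty) a(tau).\<close>

definition bprod :: "(tree option \<Rightarrow> 'k::comm_ring_1) \<Rightarrow> (tree option \<Rightarrow> 'k) \<Rightarrow> tree option \<Rightarrow> 'k" where
  "bprod a b x = (case x of None \<Rightarrow> b None
     | Some t \<Rightarrow> b None * a (Some t)
          + (\<Sum>S\<in>Poly_Mapping.keys (subtree_gen a t). Poly_Mapping.lookup (subtree_gen a t) S * b (Some (Node S))))"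

definition bunit :: "tree option \<Rightarrow> 'k::comm_ring_1" where
  "bunit x = (if x = None then 1 else 0)"

definition tame :: "(tree option \<Rightarrow> 'k::real_normed_field) \<Rightarrow> bool" where
  "tame a \<longleftrightarrow> a None = 1 \<and> (\<exists>C>0. \<exists>K>0. \<forall>t. norm (a (Some t)) \<le> C * K ^ tsize t)"

definition BTM :: "(tree option \<Rightarrow> 'k::real_normed_field) monoid" where
  "BTM = \<lparr>carrier = {a. tame a}, mult = bprod, one = bunit\<rparr>"

definition Ksub :: "nat \<Rightarrow> (tree option \<Rightarrow> 'k::real_normed_field) set" where
  "Ksub n = {a \<in> carrier BTM. \<forall>t. tsize t \<le> n \<longrightarrow> a (Some t) = 0}"

definition inE :: "nat \<Rightarrow> (tree option \<Rightarrow> 'k::real_normed_field) \<Rightarrow> bool" where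
  "inE k x \<longleftrightarrow> x None = 0 \<and> bdd_above (range (\<lambda>t. norm (x (Some t)) / 2 ^ (k * tsize t)))"

definition wnorm :: "nat \<Rightarrow> (tree option \<Rightarrow> 'k::real_normed_field) \<Rightarrow> real" where
  "wnorm k x = (SUP t. norm (x (Some t)) / 2 ^ (k * tsize t))"

definition Mstar :: "(tree option \<Rightarrow> 'k::real_normed_field) set" where
  "Mstar = {x. \<exists>k. inE k x}"

text \<open>Inductive limit topology: U is open iff U \<inter> E_k is open in the Banach space E_k
  for every k.\<close>

definition ind_open :: "(tree option \<Rightarrow> 'k::real_normed_field) set \<Rightarrow> bool" where
  "ind_open U \<longleftrightarrow> U \<subseteq> Mstar \<and>
     (\<forall>k. \<forall>x\<in>U. inE k x \<longrightarrow> (\<exists>\<epsilon>>0. \<forall>y. inE k y \<and> wnorm k (\<lambda>t. y t - x t) < \<epsilon> \<longrightarrow> y \<in> U))"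

definition ind_closed :: "(tree option \<Rightarrow> 'k::real_normed_field) set \<Rightarrow> bool" where
  "ind_closed A \<longleftrightarrow> A \<subseteq> Mstar \<and> ind_open (Mstar - A)"

definition chart :: "(tree option \<Rightarrow> 'k::real_normed_field) \<Rightarrow> tree option \<Rightarrow> 'k" where
  "chart a = (\<lambda>x. a x - bunit x)"

definition klinear_subspace :: "(tree option \<Rightarrow> 'k::real_normed_field) set \<Rightarrow> bool" where
  "klinear_subspace V \<longleftrightarrow> (\<lambda>_. 0) \<in> V \<and> (\<forall>x\<in>V. \<forall>y\<in>V. (\<lambda>t. x t + y t) \<in> V)
     \<and> (\<forall>c. \<forall>x\<in>V. (\<lambda>t. c * x t) \<in> V)"

definition kspan :: "(tree option \<Rightarrow> 'k::real_normed_field) set \<Rightarrow> (tree option \<Rightarrow> 'k) set" where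
  "kspan B = {(\<lambda>t. \<Sum>b\<in>B. c b * b t) | c. True}"

definition split_fin_codim :: "(tree option \<Rightarrow> 'k::real_normed_field) set \<Rightarrow> bool" where
  "split_fin_codim V \<longleftrightarrow> klinear_subspace V \<and> V \<subseteq> Mstar \<and> ind_closed V \<and>
     (\<exists>B. finite B \<and> B \<subseteq> Mstar \<and> V \<inter> kspan B = {\<lambda>_. 0} \<and>
        (\<forall>x\<in>Mstar. \<exists>v\<in>V. \<exists>w\<in>kspan B. x = (\<lambda>t. v t + w t)))"

definition Vsub :: "nat \<Rightarrow> (tree option \<Rightarrow> 'k::real_normed_field) set" where
  "Vsub n = {x \<in> Mstar. \<forall>t. tsize t \<le> n \<longrightarrow> x (Some t) = 0}"

end

theory Submission
  imports Defs
begin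

definition lin :: "('k::zero \<Rightarrow> 'b::comm_ring_1) \<Rightarrow> ('m \<Rightarrow> 'b) \<Rightarrow> ('m \<Rightarrow>\<^sub>0 'k) \<Rightarrow> 'b" where
  "lin \<iota> m p = (\<Sum>S\<in>Poly_Mapping.keys p. \<iota> (Poly_Mapping.lookup p S) * m S)"

lemma lin_superset:
  assumes "\<iota> 0 = 0" "finite A" "Poly_Mapping.keys p \<subseteq> A"
  shows "lin \<iota> m p = (\<Sum>S\<in>A. \<iota> (Poly_Mapping.lookup p S) * m S)"
  unfolding lin_def
  by (rule sum.mono_neutral_left) (use assms in \<open>auto simp: in_keys_iff\<close>)

lemma poly_expand:
  fixes p :: "'m \<Rightarrow>\<^sub>0 'k::comm_monoid_add"
  shows "p = (\<Sum>S\<in>Poly_Mapping.keys p. Poly_Mapping.single S (Poly_Mapping.lookup p S))"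
proof (rule poly_mapping_eqI)
  fix k
  show "Poly_Mapping.lookup p k = Poly_Mapping.lookup (\<Sum>S\<in>Poly_Mapping.keys p. Poly_Mapping.single S (Poly_Mapping.lookup p S)) k"
    by (simp add: lookup_sum lookup_single when_def in_keys_iff)
qed

lemma additive_sum:
  assumes "F 0 = 0" "\<And>p q. F (p + q) = F p + F q"
  shows "F (sum f I) = (\<Sum>i\<in>I. F (f i))"
proof (induction I rule: infinite_finite_induct)
  case (infinite A) then show ?case using assms by simp
next
  case empty then show ?case using assms by simp
next
  case (insert x F) then show ?case using assms by simp
qed

lemma additive_eq_lin:
  fixes p :: "'m \<Rightarrow>\<^sub>0 'k::comm_monoid_add"
  assumes "F 0 = 0" "\<And>p q. F (p + q) = F p + F q"
    and "\<And>S v. F (Poly_Mapping.single S v) = \<iota> v * m S"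
  shows "F p = lin \<iota> m p"
proof -
  have "F p = F (\<Sum>S\<in>Poly_Mapping.keys p. Poly_Mapping.single S (Poly_Mapping.lookup p S))"
    by (subst poly_expand[of p]) simp
  also have "\<dots> = (\<Sum>S\<in>Poly_Mapping.keys p. F (Poly_Mapping.single S (Poly_Mapping.lookup p S)))"
    by (rule additive_sum[OF assms(1,2)])
  also have "\<dots> = lin \<iota> m p" by (simp add: assms(3) lin_def)
  finally show ?thesis .
qed

lemma lin_add:
  assumes "\<iota> 0 = 0" "\<And>x y. \<iota> (x + y) = \<iota> x + \<iota> y"
  shows "lin \<iota> m (p + q) = lin \<iota> m p + lin \<iota> m q"
proof -
  let ?A = "Poly_Mapping.keys p \<union> Poly_Mapping.keys q"
  have f: "finite ?A" by simp
  have "lin \<iota> m (p + q) = (\<Sum>S\<in>?A. \<iota> (Poly_Mapping.lookup (p+q) S) * m S)"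
    by (rule lin_superset[where \<iota>=\<iota> and m=m, OF assms(1) f]) (rule keys_add)
  also have "\<dots> = (\<Sum>S\<in>?A. \<iota> (Poly_Mapping.lookup p S) * m S) + (\<Sum>S\<in>?A. \<iota> (Poly_Mapping.lookup q S) * m S)"
    by (simp add: lookup_add assms(2) distrib_right sum.distrib)
  also have "\<dots> = lin \<iota> m p + lin \<iota> m q"
    by (simp add: lin_superset[where \<iota>=\<iota> and m=m, OF assms(1) f, where p=p] lin_superset[where \<iota>=\<iota> and m=m, OF assms(1) f, where p=q])
  finally show ?thesis .
qed

lemma lin_zero [simp]: "lin \<iota> m 0 = 0"
  by (simp add: lin_def)

lemma lin_single:
  assumes "\<iota> 0 = 0"
  shows "lin \<iota> m (Poly_Mapping.single S v) = \<iota> v * m S"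
  using assms by (simp add: lin_def)

lemma lin_sum:
  assumes "\<iota> 0 = 0" "\<And>x y. \<iota> (x + y) = \<iota> x + \<iota> y"
  shows "lin \<iota> m (sum f I) = (\<Sum>i\<in>I. lin \<iota> m (f i))"
  by (rule additive_sum) (simp_all add: lin_add[where \<iota>=\<iota> and m=m, OF assms])

lemma lin_mult:
  fixes p q :: "'m::comm_monoid_add \<Rightarrow>\<^sub>0 'k::comm_ring_1"
  assumes "\<iota> 0 = 0" "\<And>x y. \<iota> (x + y) = \<iota> x + \<iota> y" "\<And>x y. \<iota> (x * y) = \<iota> x * \<iota> y"
    and "\<And>S T. m (S + T) = m S * m T"
  shows "lin \<iota> m (p * q) = lin \<iota> m p * lin \<iota> m q"
proof -
  have "p * q = (\<Sum>S\<in>Poly_Mapping.keys p. Poly_Mapping.single S (Poly_Mapping.lookup p S))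
      * (\<Sum>T\<in>Poly_Mapping.keys q. Poly_Mapping.single T (Poly_Mapping.lookup q T))"
    by (metis poly_expand)
  also have "\<dots> = (\<Sum>S\<in>Poly_Mapping.keys p. \<Sum>T\<in>Poly_Mapping.keys q.
       Poly_Mapping.single (S + T) (Poly_Mapping.lookup p S * Poly_Mapping.lookup q T))"
    by (simp add: sum_product mult_single)
  finally have "lin \<iota> m (p * q) = (\<Sum>S\<in>Poly_Mapping.keys p. \<Sum>T\<in>Poly_Mapping.keys q.
       \<iota> (Poly_Mapping.lookup p S) * m S * (\<iota> (Poly_Mapping.lookup q T) * m T))"
    by (simp add: lin_sum[where \<iota>=\<iota> and m=m, OF assms(1,2)] lin_single[where \<iota>=\<iota> and m=m, OF assms(1)] assms(3,4) mult_ac)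
  also have "\<dots> = lin \<iota> m p * lin \<iota> m q"
    by (simp add: lin_def sum_product)
  finally show ?thesis .
qed

lemma lin_one:
  assumes "\<iota> 0 = 0" "\<iota> 1 = 1" "m 0 = 1"
  shows "lin \<iota> m (1 :: 'm::comm_monoid_add \<Rightarrow>\<^sub>0 'k::comm_ring_1) = 1"
  by (metis assms lin_single mult_1 single_one)

lemma lin_prod_mset:
  fixes f :: "'a \<Rightarrow> ('m::comm_monoid_add \<Rightarrow>\<^sub>0 'k::comm_ring_1)"
  assumes "\<iota> 0 = 0" "\<And>x y. \<iota> (x + y) = \<iota> x + \<iota> y" "\<And>x y. \<iota> (x * y) = \<iota> x * \<iota> y"
    and "\<And>S T. m (S + T) = m S * m T" "\<iota> 1 = 1" "m 0 = 1"
  shows "lin \<iota> m (prod_mset (image_mset f M)) = prod_mset (image_mset (\<lambda>c. lin \<iota> m (f c)) M)"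
  by (induction M) (simp_all add: lin_one[where \<iota>=\<iota> and m=m, OF assms(1,5,6)] lin_mult[where \<iota>=\<iota> and m=m, OF assms(1-4)])

lemma lookup_scale:
  fixes q :: "'m::comm_monoid_add \<Rightarrow>\<^sub>0 'k::comm_ring_1"
  shows "Poly_Mapping.lookup (Poly_Mapping.single 0 v * q) S = v * Poly_Mapping.lookup q S"
  by (simp flip: mult_map_scale_conv_mult add: map.rep_eq when_def)

lemma lin_scale:
  fixes q :: "'m::comm_monoid_add \<Rightarrow>\<^sub>0 'k::comm_ring_1"
  assumes "\<iota> 0 = 0" "\<And>x y. \<iota> (x * y) = \<iota> x * \<iota> y"
  shows "lin \<iota> m (Poly_Mapping.single 0 v * q) = \<iota> v * lin \<iota> m q"
proof -
  have k: "Poly_Mapping.keys (Poly_Mapping.single 0 v * q) \<subseteq> Poly_Mapping.keys q"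
    by (auto simp: in_keys_iff lookup_scale)
  have "lin \<iota> m (Poly_Mapping.single 0 v * q) = (\<Sum>S\<in>Poly_Mapping.keys q. \<iota> (v * Poly_Mapping.lookup q S) * m S)"
    by (simp add: lin_superset[where \<iota>=\<iota> and m=m, OF assms(1) _ k] lookup_scale)
  also have "\<dots> = \<iota> v * lin \<iota> m q"
    by (simp add: lin_def assms(2) sum_distrib_left mult_ac)
  finally show ?thesis .
qed

definition msize :: "tree multiset \<Rightarrow> nat" where
  "msize S = sum_mset (image_mset tsize S)"

lemma tsize_Node: "tsize (Node M) = 1 + msize M"
  by (simp add: msize_def)

declare tsize.simps[simp del]
declare tsize_Node[simp]

lemma msize_add [simp]: "msize (S + T) = msize S + msize T"
  by (simp add: msize_def)

lemma msize_empty [simp]: "msize {#} = 0"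
  by (simp add: msize_def)

lemma msize_add_mset [simp]: "msize (add_mset t S) = tsize t + msize S"
  by (simp add: msize_def)

lemma msize_single [simp]: "msize {#t#} = tsize t"
  by (simp add: msize_def)

lemma tsize_pos: "tsize t \<ge> 1"
  by (cases t) simp

lemma tsize_child: "c \<in># M \<Longrightarrow> tsize c < tsize (Node M)"
proof -
  assume "c \<in># M"
  then obtain M' where "M = add_mset c M'" by (metis multi_member_split)
  then show ?thesis by simp
qed

definition cst :: "'k::comm_ring_1 \<Rightarrow> (tree multiset \<Rightarrow>\<^sub>0 'k)" where
  "cst v = Poly_Mapping.single 0 v"

lemma cst_0 [simp]: "cst 0 = 0" by (simp add: cst_def)
lemma cst_1 [simp]: "cst 1 = 1" by (simp add: cst_def)
lemma cst_add: "cst (x + y) = cst x + cst y" by (simp add: cst_def single_add)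
lemma cst_mult: "cst (x * y) = cst x * cst y" by (simp add: cst_def mult_single)

definition Lpoly :: "(tree multiset \<Rightarrow>\<^sub>0 'k::comm_ring_1) \<Rightarrow> (tree multiset \<Rightarrow>\<^sub>0 'k)" where
  "Lpoly p = (\<Sum>S\<in>Poly_Mapping.keys p. Poly_Mapping.single {#Node S#} (Poly_Mapping.lookup p S))"

definition psi :: "(tree option \<Rightarrow> 'k::comm_ring_1) \<Rightarrow> tree \<Rightarrow> (tree multiset \<Rightarrow>\<^sub>0 'k)" where
  "psi a c = Poly_Mapping.single {#} (a (Some c)) + Lpoly (subtree_gen a c)"

lemma subtree_gen_Node: "subtree_gen a (Node M) = prod_mset (image_mset (psi a) M)"
  by (simp add: psi_def[abs_def] Lpoly_def)

declare subtree_gen.simps[simp del]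

lemma Lpoly_lin: "Lpoly p = lin cst (\<lambda>S. Poly_Mapping.single {#Node S#} 1) p"
  by (simp add: Lpoly_def lin_def cst_def mult_single)

lemma Lpoly_add: "Lpoly (p + q) = Lpoly p + Lpoly q"
  by (simp add: Lpoly_lin lin_add cst_add)

lemma Lpoly_scale: "Lpoly (cst v * q) = cst v * Lpoly q"
  using lin_scale[where \<iota>=cst and m="\<lambda>S. Poly_Mapping.single {#Node S#} 1" and v=v and q=q]
  by (simp add: Lpoly_lin cst_mult cst_def[symmetric])

definition ev :: "(tree option \<Rightarrow> 'k::comm_ring_1) \<Rightarrow> (tree multiset \<Rightarrow>\<^sub>0 'k) \<Rightarrow> 'k" where
  "ev b p = lin id (\<lambda>S. prod_mset (image_mset (\<lambda>u. b (Some u)) S)) p"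

definition lam :: "(tree option \<Rightarrow> 'k::comm_ring_1) \<Rightarrow> (tree multiset \<Rightarrow>\<^sub>0 'k) \<Rightarrow> 'k" where
  "lam b p = lin id (\<lambda>S. b (Some (Node S))) p"

definition Psi :: "(tree option \<Rightarrow> 'k::comm_ring_1) \<Rightarrow> (tree multiset \<Rightarrow>\<^sub>0 'k) \<Rightarrow> (tree multiset \<Rightarrow>\<^sub>0 'k)" where
  "Psi b p = lin cst (\<lambda>S. prod_mset (image_mset (psi b) S)) p"

lemma bprod_Some: "bprod a b (Some t) = b None * a (Some t) + lam b (subtree_gen a t)"
  by (simp add: bprod_def lam_def lin_def)

lemma bprod_None [simp]: "bprod a b None = b None"
  by (simp add: bprod_def)

lemma ev_add: "ev b (p + q) = ev b p + ev b q"
  by (simp add: ev_def lin_add)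
lemma ev_mult: "ev b (p * q) = ev b p * ev b q"
  unfolding ev_def by (rule lin_mult) simp_all
lemma ev_prod_mset: "ev b (prod_mset (image_mset f M)) = prod_mset (image_mset (\<lambda>c. ev b (f c)) M)"
  unfolding ev_def by (rule lin_prod_mset) simp_all
lemma ev_single: "ev b (Poly_Mapping.single S v) = v * prod_mset (image_mset (\<lambda>u. b (Some u)) S)"
  by (simp add: ev_def lin_single)
lemma ev_cst: "ev b (cst v) = v"
  by (simp add: cst_def ev_single)

lemma ev_Lpoly: "ev b (Lpoly p) = lam b p"
proof -
  have "ev b (Lpoly p) = (\<Sum>S\<in>Poly_Mapping.keys p. ev b (Poly_Mapping.single {#Node S#} (Poly_Mapping.lookup p S)))"
    unfolding Lpoly_def ev_def by (rule lin_sum) simp_all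
  also have "\<dots> = lam b p" by (simp add: ev_single lam_def lin_def)
  finally show ?thesis .
qed

lemma ev_psi: "b None = 1 \<Longrightarrow> ev b (psi a c) = bprod a b (Some c)"
  by (simp add: psi_def ev_add ev_Lpoly ev_single bprod_Some)

lemma Psi_add: "Psi b (p + q) = Psi b p + Psi b q"
  by (simp add: Psi_def lin_add cst_add)
lemma Psi_mult: "Psi b (p * q) = Psi b p * Psi b q"
  unfolding Psi_def by (rule lin_mult) (simp_all add: cst_add cst_mult)
lemma Psi_prod_mset: "Psi b (prod_mset (image_mset f M)) = prod_mset (image_mset (\<lambda>c. Psi b (f c)) M)"
  unfolding Psi_def by (rule lin_prod_mset) (simp_all add: cst_add cst_mult)
lemma Psi_single: "Psi b (Poly_Mapping.single S v) = cst v * prod_mset (image_mset (psi b) S)"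
  by (simp add: Psi_def lin_single)
lemma Psi_cst: "Psi b (cst v) = cst v"
  by (simp add: cst_def Psi_single)

lemma Psi_Lpoly: "Psi b (Lpoly p) = cst (lam b p) + Lpoly (Psi b p)"
proof -
  have "Psi b (Lpoly p) = (\<Sum>S\<in>Poly_Mapping.keys p. cst (Poly_Mapping.lookup p S) * psi b (Node S))"
    unfolding Lpoly_def Psi_def
    by (simp add: lin_sum cst_add lin_single)
  also have "\<dots> = (\<Sum>S\<in>Poly_Mapping.keys p. cst (Poly_Mapping.lookup p S * b (Some (Node S)))
      + Lpoly (cst (Poly_Mapping.lookup p S) * Psi b (Poly_Mapping.single S 1)))"
    by (rule sum.cong) (simp_all add: psi_def Lpoly_scale Psi_single subtree_gen_Node cst_mult
        distrib_left cst_def[symmetric])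
  also have "\<dots> = cst (lam b p) + Lpoly (Psi b p)"
  proof -
    have "Psi b p = Psi b (\<Sum>S\<in>Poly_Mapping.keys p. Poly_Mapping.single S (Poly_Mapping.lookup p S))"
      by (subst poly_expand[of p]) simp
    also have "\<dots> = (\<Sum>S\<in>Poly_Mapping.keys p. cst (Poly_Mapping.lookup p S) * Psi b (Poly_Mapping.single S 1))"
      by (simp add: Psi_def lin_sum cst_add lin_single)
    finally have e: "Psi b p = \<dots>" .
    have l: "Lpoly (sum f I) = (\<Sum>i\<in>I. Lpoly (f i))" for f :: "tree multiset \<Rightarrow> _" and I
      by (rule additive_sum) (simp_all add: Lpoly_add, simp add: Lpoly_def)
    have c: "cst (sum f I) = (\<Sum>i\<in>I. cst (f i))" for f :: "tree multiset \<Rightarrow> _" and I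
      by (rule additive_sum) (simp_all add: cst_add)
    show ?thesis
      by (simp add: e l c sum.distrib lam_def lin_def)
  qed
  finally show ?thesis .
qed

lemma Psi_psi: "b None = 1 \<Longrightarrow> Psi b (psi a t) = psi (bprod a b) t"
proof (induction t)
  case (Node M)
  have IH: "\<And>c. c \<in># M \<Longrightarrow> Psi b (psi a c) = psi (bprod a b) c"
    using Node by simp
  have G: "Psi b (subtree_gen a (Node M)) = subtree_gen (bprod a b) (Node M)"
    unfolding subtree_gen_Node Psi_prod_mset
    by (rule arg_cong[where f=prod_mset], rule image_mset_cong) (simp add: IH)
  have "Psi b (psi a (Node M)) = cst (a (Some (Node M))) + cst (lam b (subtree_gen a (Node M)))
        + Lpoly (Psi b (subtree_gen a (Node M)))"
    by (simp add: psi_def Psi_add Psi_Lpoly cst_def[symmetric] Psi_cst)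
  also have "\<dots> = psi (bprod a b) (Node M)"
    by (simp add: G psi_def bprod_Some Node.prems cst_def single_add)
  finally show ?case .
qed

lemma ev_Psi:
  assumes "c None = 1"
  shows "ev c (Psi b p) = ev (bprod b c) p"
proof -
  have "ev c (Psi b p) = lin id (\<lambda>S. prod_mset (image_mset (\<lambda>u. bprod b c (Some u)) S)) p"
  proof (rule additive_eq_lin[where F="\<lambda>p. ev c (Psi b p)"])
    show "ev c (Psi b 0) = 0" by (simp add: Psi_def ev_def)
    show "ev c (Psi b (p + q)) = ev c (Psi b p) + ev c (Psi b q)" for p q
      by (simp add: Psi_add ev_add)
    show "ev c (Psi b (Poly_Mapping.single S v)) = id v * prod_mset (image_mset (\<lambda>u. bprod b c (Some u)) S)" for S v
      by (simp add: Psi_single ev_mult ev_cst ev_prod_mset ev_psi assms)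
  qed
  then show ?thesis by (simp add: ev_def)
qed

lemma bprod_assoc:
  assumes "b None = 1" "c None = 1"
  shows "bprod (bprod a b) c = bprod a (bprod b c)"
proof
  fix x show "bprod (bprod a b) c x = bprod a (bprod b c) x"
  proof (cases x)
    case None then show ?thesis by simp
  next
    case (Some t)
    have "bprod (bprod a b) c (Some t) = ev c (psi (bprod a b) t)"
      by (simp add: ev_psi assms)
    also have "\<dots> = ev c (Psi b (psi a t))" by (simp add: Psi_psi assms)
    also have "\<dots> = ev (bprod b c) (psi a t)" by (simp add: ev_Psi assms)
    also have "\<dots> = bprod a (bprod b c) (Some t)" by (simp add: ev_psi assms)
    finally show ?thesis using Some by simp
  qed
qed

section \<open>Unit\<close>

lemma Lpoly_single: "Lpoly (Poly_Mapping.single S (1::'k::comm_ring_1)) = Poly_Mapping.single {#Node S#} 1"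
  by (simp add: Lpoly_def)

lemma bunit_Some [simp]: "bunit (Some t) = 0" by (simp add: bunit_def)
lemma bunit_None [simp]: "bunit None = 1" by (simp add: bunit_def)

lemma subtree_gen_bunit: "subtree_gen bunit t = Poly_Mapping.single (case t of Node M \<Rightarrow> M) (1::'k::comm_ring_1)"
proof (induction t)
  case (Node M)
  have p: "psi bunit c = Poly_Mapping.single {#c#} (1::'k)" if "c \<in># M" for c
  proof (cases c)
    case (Node S)
    then show ?thesis using Node.IH[OF that] by (simp add: psi_def Lpoly_single)
  qed
  have "subtree_gen bunit (Node M) = prod_mset (image_mset (\<lambda>c. Poly_Mapping.single {#c#} (1::'k)) M)"
    unfolding subtree_gen_Node by (rule arg_cong[where f=prod_mset], rule image_mset_cong) (simp add: p)
  also have "\<dots> = Poly_Mapping.single M 1"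
    by (induction M) (simp_all add: mult_single flip: single_one)
  finally show ?case by simp
qed

lemma bprod_bunit_left: "bprod bunit b = b"
proof
  fix x show "bprod bunit b x = b x"
  proof (cases x)
    case None then show ?thesis by simp
  next
    case (Some t)
    then show ?thesis
      by (cases t) (simp add: bprod_Some subtree_gen_bunit lam_def lin_single)
  qed
qed

section \<open>Congruence and degree\<close>

lemma subtree_gen_cong:
  "(\<And>u. tsize u < tsize t \<Longrightarrow> a (Some u) = a' (Some u)) \<Longrightarrow> subtree_gen a t = subtree_gen a' t"
proof (induction t)
  case (Node M)
  have "psi a c = psi a' c" if c: "c \<in># M" for c
  proof -
    have lt: "tsize c < tsize (Node M)" by (rule tsize_child[OF c])
    have "subtree_gen a c = subtree_gen a' c"
      by (rule Node.IH[OF c]) (use Node.prems lt in auto)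
    then show ?thesis using Node.prems[OF lt] by (simp add: psi_def)
  qed
  then show ?case unfolding subtree_gen_Node
    by (intro arg_cong[where f=prod_mset] image_mset_cong) simp
qed

definition degle :: "nat \<Rightarrow> (tree multiset \<Rightarrow>\<^sub>0 'k::comm_ring_1) \<Rightarrow> bool" where
  "degle n p \<longleftrightarrow> (\<forall>S\<in>Poly_Mapping.keys p. msize S \<le> n)"

lemma degle_add: "degle n p \<Longrightarrow> degle n q \<Longrightarrow> degle n (p + q)"
  using keys_add[of p q] by (auto simp: degle_def)

lemma degle_mult: "degle n p \<Longrightarrow> degle m q \<Longrightarrow> degle (n + m) (p * q)"
  using keys_mult[of p q] unfolding degle_def by fastforce

lemma degle_one: "degle 0 1"
  by (simp add: degle_def)

lemma degle_prod_mset: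
  "(\<And>c. c \<in># M \<Longrightarrow> degle (g c) (f c)) \<Longrightarrow> degle (sum_mset (image_mset g M)) (prod_mset (image_mset f M))"
proof (induction M)
  case empty then show ?case by (simp add: degle_one)
next
  case (add x M) then show ?case by (simp add: degle_mult)
qed

lemma degle_Lpoly: "degle n p \<Longrightarrow> degle (Suc n) (Lpoly p)"
proof -
  assume d: "degle n p"
  have "Poly_Mapping.keys (Lpoly p) \<subseteq> (\<Union>S\<in>Poly_Mapping.keys p. Poly_Mapping.keys (Poly_Mapping.single {#Node S#} (Poly_Mapping.lookup p S)))"
    unfolding Lpoly_def by (rule keys_sum)
  also have "\<dots> \<subseteq> (\<lambda>S. {#Node S#}) ` Poly_Mapping.keys p" by auto
  finally show ?thesis using d unfolding degle_def by auto
qed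

lemma degle_subtree_gen: "degle (msize M) (subtree_gen a (Node M))"
proof -
  have "degle (tsize c) (psi a c)" for c
  proof (induction c)
    case (Node M')
    have "degle (msize M') (subtree_gen a (Node M'))"
      unfolding subtree_gen_Node msize_def by (rule degle_prod_mset) (use Node.IH in simp)
    then have "degle (tsize (Node M')) (Lpoly (subtree_gen a (Node M')))"
      using degle_Lpoly by (simp add: tsize_Node)
    moreover have "degle (tsize (Node M')) (Poly_Mapping.single {#} (a (Some (Node M'))))"
      by (simp add: degle_def)
    ultimately show ?case by (simp add: psi_def degle_add)
  qed
  then show ?thesis unfolding subtree_gen_Node msize_def by (rule degle_prod_mset)
qed

lemma keys_subtree_gen_size:
  "S \<in> Poly_Mapping.keys (subtree_gen a t) \<Longrightarrow> tsize (Node S) \<le> tsize t"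
  using degle_subtree_gen[of "case t of Node M \<Rightarrow> M" a]
  by (cases t) (auto simp: degle_def tsize_Node)

definition agree_le :: "nat \<Rightarrow> (tree option \<Rightarrow> 'k) \<Rightarrow> (tree option \<Rightarrow> 'k) \<Rightarrow> bool" where
  "agree_le m a a' \<longleftrightarrow> (\<forall>u. tsize u \<le> m \<longrightarrow> a (Some u) = a' (Some u))"

lemma bprod_cong:
  assumes "agree_le m a a'" "agree_le m b b'" "b None = b' None"
  shows "agree_le m (bprod a b) (bprod a' b')"
  unfolding agree_le_def
proof (intro allI impI)
  fix t assume t: "tsize t \<le> m"
  have g: "subtree_gen a t = subtree_gen a' t"
    by (rule subtree_gen_cong) (use assms(1) t in \<open>auto simp: agree_le_def\<close>)
  have "lam b (subtree_gen a t) = lam b' (subtree_gen a t)"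
    unfolding lam_def lin_def
    by (rule sum.cong[OF refl]) (use assms(2) t keys_subtree_gen_size in \<open>fastforce simp: agree_le_def\<close>)
  moreover have "a (Some t) = a' (Some t)" using assms(1) t by (simp add: agree_le_def)
  ultimately show "bprod a b (Some t) = bprod a' b' (Some t)"
    by (simp add: bprod_Some g assms(3))
qed

section \<open>Inverse\<close>

definition Finv :: "(tree option \<Rightarrow> 'k::comm_ring_1) \<Rightarrow> (tree option \<Rightarrow> 'k) \<Rightarrow> tree option \<Rightarrow> 'k" where
  "Finv a y = (\<lambda>x. case x of None \<Rightarrow> 1 | Some t \<Rightarrow> - lam a (subtree_gen y t))"

definition yk :: "(tree option \<Rightarrow> 'k::comm_ring_1) \<Rightarrow> nat \<Rightarrow> tree option \<Rightarrow> 'k" where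
  "yk a k = (Finv a ^^ k) bunit"

lemma yk_Suc: "yk a (Suc k) (Some t) = - lam a (subtree_gen (yk a k) t)"
  by (simp add: yk_def Finv_def)

lemma yk_stab1: "tsize t \<le> k \<Longrightarrow> yk a (Suc k) (Some t) = yk a k (Some t)"
proof (induction k arbitrary: t)
  case 0 then show ?case using tsize_pos[of t] by simp
next
  case (Suc k)
  have "subtree_gen (yk a (Suc k)) t = subtree_gen (yk a k) t"
    by (rule subtree_gen_cong) (use Suc in auto)
  then show ?case by (simp add: yk_Suc)
qed

lemma yk_stab: "k \<le> j \<Longrightarrow> tsize t \<le> k \<Longrightarrow> yk a j (Some t) = yk a k (Some t)"
proof (induction j rule: dec_induct)
  case base then show ?case by simp
next
  case (step j) then show ?case using yk_stab1[of t j a] by simp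
qed

definition yinv :: "(tree option \<Rightarrow> 'k::comm_ring_1) \<Rightarrow> tree option \<Rightarrow> 'k" where
  "yinv a = (\<lambda>x. case x of None \<Rightarrow> 1 | Some t \<Rightarrow> yk a (tsize t) (Some t))"

lemma yinv_eq: "yinv a (Some t) = - lam a (subtree_gen (yinv a) t)"
proof -
  obtain n where n: "tsize t = Suc n" using tsize_pos[of t] by (cases "tsize t") auto
  have "subtree_gen (yk a n) t = subtree_gen (yinv a) t"
    by (rule subtree_gen_cong) (use n in \<open>auto simp: yinv_def intro!: yk_stab\<close>)
  then show ?thesis by (simp add: yinv_def n yk_Suc)
qed

lemma yinv_None [simp]: "yinv a None = 1"
  by (simp add: yinv_def)

lemma yinv_left: "a None = 1 \<Longrightarrow> bprod (yinv a) a = bunit"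
proof
  fix x assume a: "a None = 1"
  show "bprod (yinv a) a x = bunit x"
    by (cases x) (simp_all add: a bunit_def bprod_Some yinv_eq[where t=t for t])
qed

definition Wt :: "real \<Rightarrow> (tree multiset \<Rightarrow>\<^sub>0 'k::real_normed_field) \<Rightarrow> real" where
  "Wt w p = (\<Sum>S\<in>Poly_Mapping.keys p. norm (Poly_Mapping.lookup p S) * w ^ msize S)"

lemma Wt_superset:
  "finite A \<Longrightarrow> Poly_Mapping.keys p \<subseteq> A \<Longrightarrow> Wt w p = (\<Sum>S\<in>A. norm (Poly_Mapping.lookup p S) * w ^ msize S)"
  unfolding Wt_def by (rule sum.mono_neutral_left) (auto simp: in_keys_iff)

lemma Wt_nonneg: "w \<ge> 0 \<Longrightarrow> Wt w p \<ge> 0"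
  unfolding Wt_def by (intro sum_nonneg) simp

lemma Wt_add: "w \<ge> 0 \<Longrightarrow> Wt w (p + q) \<le> Wt w p + Wt w q"
proof -
  assume w: "w \<ge> 0"
  let ?A = "Poly_Mapping.keys p \<union> Poly_Mapping.keys q"
  have "Wt w (p + q) = (\<Sum>S\<in>?A. norm (Poly_Mapping.lookup p S + Poly_Mapping.lookup q S) * w ^ msize S)"
    by (simp add: Wt_superset[of ?A] keys_add lookup_add)
  also have "\<dots> \<le> (\<Sum>S\<in>?A. norm (Poly_Mapping.lookup p S) * w ^ msize S + norm (Poly_Mapping.lookup q S) * w ^ msize S)"
    by (intro sum_mono) (metis distrib_right mult_right_mono norm_triangle_ineq w zero_le_power)
  also have "\<dots> = Wt w p + Wt w q"
    by (simp add: sum.distrib Wt_superset[of ?A])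
  finally show ?thesis .
qed

lemma Wt_zero [simp]: "Wt w 0 = 0" by (simp add: Wt_def)

lemma Wt_single: "Wt w (Poly_Mapping.single S v) = norm v * w ^ msize S"
  by (simp add: Wt_def)

lemma Wt_sum: "w \<ge> 0 \<Longrightarrow> Wt w (sum f I) \<le> (\<Sum>i\<in>I. Wt w (f i))"
proof (induction I rule: infinite_finite_induct)
  case (insert x F)
  then show ?case using Wt_add[of w "f x" "sum f F"] by simp
qed simp_all

lemma Wt_mult: "w \<ge> 0 \<Longrightarrow> Wt w (p * q) \<le> Wt w p * Wt w q"
proof -
  assume w: "w \<ge> 0"
  have "p * q = (\<Sum>S\<in>Poly_Mapping.keys p. Poly_Mapping.single S (Poly_Mapping.lookup p S))
      * (\<Sum>T\<in>Poly_Mapping.keys q. Poly_Mapping.single T (Poly_Mapping.lookup q T))"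
    by (metis poly_expand)
  also have "\<dots> = (\<Sum>S\<in>Poly_Mapping.keys p. \<Sum>T\<in>Poly_Mapping.keys q.
       Poly_Mapping.single (S + T) (Poly_Mapping.lookup p S * Poly_Mapping.lookup q T))"
    by (simp add: sum_product mult_single)
  finally have e: "p * q = \<dots>" .
  have "Wt w (p * q) \<le> (\<Sum>S\<in>Poly_Mapping.keys p. Wt w (\<Sum>T\<in>Poly_Mapping.keys q.
       Poly_Mapping.single (S + T) (Poly_Mapping.lookup p S * Poly_Mapping.lookup q T)))"
    unfolding e by (rule Wt_sum[OF w])
  also have "\<dots> \<le> (\<Sum>S\<in>Poly_Mapping.keys p. \<Sum>T\<in>Poly_Mapping.keys q.
       Wt w (Poly_Mapping.single (S + T) (Poly_Mapping.lookup p S * Poly_Mapping.lookup q T)))"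
    by (rule sum_mono) (rule Wt_sum[OF w])
  also have "\<dots> = Wt w p * Wt w q"
    unfolding Wt_single by (simp add: Wt_def sum_product norm_mult power_add mult_ac)
  finally show ?thesis .
qed

lemma Wt_one: "Wt w 1 = 1"
  by (simp add: Wt_def)

lemma Wt_prod_mset:
  "w \<ge> 0 \<Longrightarrow> Wt w (prod_mset (image_mset f M)) \<le> prod_mset (image_mset (\<lambda>c. Wt w (f c)) M)"
proof (induction M)
  case empty then show ?case by (simp add: Wt_one)
next
  case (add x M)
  have "Wt w (f x * prod_mset (image_mset f M)) \<le> Wt w (f x) * Wt w (prod_mset (image_mset f M))"
    by (rule Wt_mult[OF add.prems])
  also have "\<dots> \<le> Wt w (f x) * prod_mset (image_mset (\<lambda>c. Wt w (f c)) M)"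
    by (rule mult_left_mono[OF add.IH[OF add.prems] Wt_nonneg[OF add.prems]])
  finally show ?case by simp
qed

lemma Wt_Lpoly: "w \<ge> 0 \<Longrightarrow> Wt w (Lpoly p) \<le> w * Wt w p"
proof -
  assume w: "w \<ge> 0"
  have "Wt w (Lpoly p) \<le> (\<Sum>S\<in>Poly_Mapping.keys p. Wt w (Poly_Mapping.single {#Node S#} (Poly_Mapping.lookup p S)))"
    unfolding Lpoly_def by (rule Wt_sum[OF w])
  also have "\<dots> = w * Wt w p"
    unfolding Wt_single by (simp add: Wt_def sum_distrib_left mult_ac)
  finally show ?thesis .
qed

lemma Wt_psi: "w \<ge> 0 \<Longrightarrow> Wt w (psi a c) \<le> norm (a (Some c)) + w * Wt w (subtree_gen a c)"
proof -
  assume w: "w \<ge> 0"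
  have "Wt w (psi a c) \<le> Wt w (Poly_Mapping.single {#} (a (Some c))) + Wt w (Lpoly (subtree_gen a c))"
    unfolding psi_def by (rule Wt_add[OF w])
  also have "\<dots> \<le> norm (a (Some c)) + w * Wt w (subtree_gen a c)"
    using Wt_Lpoly[OF w, of "subtree_gen a c"] by (simp add: Wt_single)
  finally show ?thesis .
qed

lemma prod_mset_mono_nonneg:
  fixes f g :: "'a \<Rightarrow> real"
  shows "(\<And>c. c \<in># M \<Longrightarrow> 0 \<le> f c \<and> f c \<le> g c) \<Longrightarrow> prod_mset (image_mset f M) \<le> prod_mset (image_mset g M)"
proof (induction M)
  case (add x M)
  have x: "0 \<le> f x" "f x \<le> g x" using add.prems by auto
  have ih: "prod_mset (image_mset f M) \<le> prod_mset (image_mset g M)"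
    by (rule add.IH) (use add.prems in auto)
  have nn: "0 \<le> prod_mset (image_mset f M)"
  proof -
    have "\<forall>c\<in>#M. 0 \<le> f c" using add.prems by auto
    then show ?thesis by (induction M) (auto simp: mult_nonneg_nonneg)
  qed
  have "f x * prod_mset (image_mset f M) \<le> g x * prod_mset (image_mset g M)"
    by (rule mult_mono[OF x(2) ih]) (use x nn in auto)
  then show ?case by simp
qed simp

lemma prod_mset_power: "prod_mset (image_mset (\<lambda>c. (E::real) ^ tsize c) M) = E ^ msize M"
  by (induction M) (simp_all add: power_add)

lemma norm_lam:
  fixes b :: "tree option \<Rightarrow> 'k::real_normed_field"
  assumes "\<And>u. norm (b (Some u)) \<le> C * K ^ tsize u" "0 \<le> K" "K \<le> w" "0 \<le> C"
  shows "norm (lam b p) \<le> C * K * Wt w p"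
proof -
  have "norm (lam b p) \<le> (\<Sum>S\<in>Poly_Mapping.keys p. norm (Poly_Mapping.lookup p S) * norm (b (Some (Node S))))"
    unfolding lam_def lin_def by (rule order_trans[OF norm_sum]) (simp add: norm_mult)
  also have "\<dots> \<le> (\<Sum>S\<in>Poly_Mapping.keys p. norm (Poly_Mapping.lookup p S) * (C * K * w ^ msize S))"
  proof (intro sum_mono mult_left_mono)
    fix S
    have "norm (b (Some (Node S))) \<le> C * (K * K ^ msize S)" using assms(1)[of "Node S"] by simp
    also have "\<dots> \<le> C * (K * w ^ msize S)"
      using assms by (intro mult_left_mono power_mono) auto
    finally show "norm (b (Some (Node S))) \<le> C * K * w ^ msize S" by (simp add: mult_ac)
  qed simp
  also have "\<dots> = C * K * Wt w p"
    by (simp add: Wt_def sum_distrib_left mult_ac)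
  finally show ?thesis .
qed

lemma Wt_subtree_gen_bound:
  fixes b :: "tree option \<Rightarrow> 'k::real_normed_field"
  assumes E: "E > 0" and x: "x \<ge> 0" and D: "D \<ge> 0" "D + x \<le> 1" and w: "w = x * E"
  shows "(\<And>u. tsize u < tsize t \<Longrightarrow> norm (b (Some u)) \<le> D * E ^ tsize u)
     \<Longrightarrow> Wt w (subtree_gen b t) * E \<le> E ^ tsize t"
proof (induction t)
  case (Node M)
  have w0: "w \<ge> 0" using w E x by simp
  have c: "Wt w (psi b c) \<le> E ^ tsize c" if cM: "c \<in># M" for c
  proof -
    have lt: "tsize c < tsize (Node M)" by (rule tsize_child[OF cM])
    have ih: "Wt w (subtree_gen b c) * E \<le> E ^ tsize c"
      by (rule Node.IH[OF cM]) (use Node.prems lt in auto)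
    have "Wt w (psi b c) \<le> norm (b (Some c)) + w * Wt w (subtree_gen b c)" by (rule Wt_psi[OF w0])
    also have "\<dots> \<le> D * E ^ tsize c + x * E ^ tsize c"
    proof (rule add_mono)
      show "norm (b (Some c)) \<le> D * E ^ tsize c" using Node.prems[OF lt] .
      show "w * Wt w (subtree_gen b c) \<le> x * E ^ tsize c"
      proof -
        have "w * Wt w (subtree_gen b c) = x * (Wt w (subtree_gen b c) * E)" by (simp add: w mult_ac)
        also have "\<dots> \<le> x * E ^ tsize c" by (rule mult_left_mono[OF ih x])
        finally show ?thesis .
      qed
    qed
    also have "\<dots> = (D + x) * E ^ tsize c" by (simp add: algebra_simps)
    also have "\<dots> \<le> E ^ tsize c" using D E by (simp add: mult_left_le_one_le)
    finally show ?thesis .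
  qed
  have "Wt w (subtree_gen b (Node M)) \<le> prod_mset (image_mset (\<lambda>c. Wt w (psi b c)) M)"
    unfolding subtree_gen_Node by (rule Wt_prod_mset[OF w0])
  also have "\<dots> \<le> prod_mset (image_mset (\<lambda>c. E ^ tsize c) M)"
    by (rule prod_mset_mono_nonneg) (simp add: c Wt_nonneg[OF w0])
  also have "\<dots> = E ^ msize M" by (rule prod_mset_power)
  finally show ?case using E by (simp add: mult_right_mono mult.commute)
qed

lemma tame_bound:
  fixes a :: "tree option \<Rightarrow> 'k::real_normed_field"
  assumes "tame a"
  obtains C K where "C \<ge> 1" "K > 0" "\<And>u. norm (a (Some u)) \<le> C * K ^ tsize u"
proof -
  obtain C K where CK: "C > 0" "K > 0" "\<And>t. norm (a (Some t)) \<le> C * K ^ tsize t"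
    using assms unfolding tame_def by blast
  have "norm (a (Some u)) \<le> max C 1 * K ^ tsize u" for u
  proof -
    have "C * K ^ tsize u \<le> max C 1 * K ^ tsize u"
      using CK(2) by (intro mult_right_mono) auto
    then show ?thesis using CK(3)[of u] by linarith
  qed
  then show ?thesis using that[of "max C 1" K] CK by auto
qed

lemma half_bound:
  fixes C K E :: real
  assumes "C \<ge> 1" "K > 0" "E \<ge> 2 * C * K" "n \<ge> 1"
  shows "C * K ^ n \<le> 1/2 * E ^ n"
proof -
  have "C * K ^ n \<le> C ^ n * K ^ n"
    using assms by (intro mult_right_mono) (auto simp: power_increasing[of 1 n C, simplified])
  also have "\<dots> = (C * K) ^ n" by (simp add: power_mult_distrib)
  also have "\<dots> \<le> 1/2 * (2 ^ n * (C * K) ^ n)"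
  proof -
    have "(2::real) \<le> 2 ^ n" using assms(4) by (metis power_one_right power_increasing one_le_numeral)
    then show ?thesis using assms by (simp add: mult_right_mono)
  qed
  also have "\<dots> = 1/2 * (2 * C * K) ^ n" by (simp add: power_mult_distrib)
  also have "\<dots> \<le> 1/2 * E ^ n"
    using assms by (intro mult_left_mono power_mono) auto
  finally show ?thesis .
qed

lemma tame_bprod:
  fixes a b :: "tree option \<Rightarrow> 'k::real_normed_field"
  assumes "tame a" "tame b"
  shows "tame (bprod a b)"
proof -
  obtain Ca Ka where a: "Ca \<ge> 1" "Ka > 0" "\<And>u. norm (a (Some u)) \<le> Ca * Ka ^ tsize u"
    using tame_bound[OF assms(1)] by blast
  obtain Cb Kb where b: "Cb \<ge> 1" "Kb > 0" "\<And>u. norm (b (Some u)) \<le> Cb * Kb ^ tsize u"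
    using tame_bound[OF assms(2)] by blast
  have b1: "b None = 1" using assms(2) by (simp add: tame_def)
  define E where "E = 2 * Ca * Ka + 2 * Kb + 1"
  have E: "E \<ge> 1" "E \<ge> 2 * Ca * Ka" "Kb \<le> 1/2 * E" using a b by (auto simp: E_def)
  have ah: "norm (a (Some u)) \<le> 1/2 * E ^ tsize u" for u
    using a(3)[of u] half_bound[OF a(1,2) E(2) tsize_pos[of u]] by linarith
  have "norm (bprod a b (Some t)) \<le> (1/2 + Cb * Kb) * E ^ tsize t" for t
  proof -
    have W: "Wt (1/2 * E) (subtree_gen a t) * E \<le> E ^ tsize t"
      by (rule Wt_subtree_gen_bound[where x="1/2" and D="1/2"]) (use E ah in auto)
    have W': "Wt (1/2 * E) (subtree_gen a t) \<le> E ^ tsize t"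
    proof -
      have "Wt (1/2 * E) (subtree_gen a t) * 1 \<le> Wt (1/2 * E) (subtree_gen a t) * E"
        using E by (intro mult_left_mono Wt_nonneg) auto
      then show ?thesis using W by simp
    qed
    have "norm (bprod a b (Some t)) \<le> norm (a (Some t)) + norm (lam b (subtree_gen a t))"
      by (simp add: bprod_Some b1 norm_triangle_ineq)
    also have "\<dots> \<le> 1/2 * E ^ tsize t + Cb * Kb * Wt (1/2 * E) (subtree_gen a t)"
      by (intro add_mono ah norm_lam) (use b E in auto)
    also have "\<dots> \<le> 1/2 * E ^ tsize t + Cb * Kb * E ^ tsize t"
      using b W' by (intro add_left_mono mult_left_mono) auto
    finally show ?thesis by (simp add: algebra_simps)
  qed
  moreover have "1/2 + Cb * Kb > 0" "E > 0" using b E by (auto intro: add_pos_nonneg)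
  ultimately show ?thesis unfolding tame_def using b1 by auto
qed

lemma tame_yinv:
  fixes a :: "tree option \<Rightarrow> 'k::real_normed_field"
  assumes "tame a"
  shows "tame (yinv a)"
proof -
  obtain Ca Ka where a: "Ca \<ge> 1" "Ka > 0" "\<And>u. norm (a (Some u)) \<le> Ca * Ka ^ tsize u"
    using tame_bound[OF assms(1)] by blast
  define E where "E = 2 * Ca * Ka"
  have E: "E > 0" using a by (simp add: E_def)
  have main: "\<forall>t. tsize t = n \<longrightarrow> norm (yinv a (Some t)) \<le> 1/2 * E ^ n" for n
  proof (induction n rule: less_induct)
    case (less n)
    show ?case
    proof (intro allI impI)
      fix t assume tn: "tsize t = n"
      have W: "Wt (1/2 * E) (subtree_gen (yinv a) t) * E \<le> E ^ tsize t"
        by (rule Wt_subtree_gen_bound[where x="1/2" and D="1/2"]) (use E less tn in auto)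
      have "norm (yinv a (Some t)) = norm (lam a (subtree_gen (yinv a) t))"
        by (simp add: yinv_eq[of a t])
      also have "\<dots> \<le> Ca * Ka * Wt (1/2 * E) (subtree_gen (yinv a) t)"
        by (rule norm_lam) (use a in \<open>auto simp: E_def\<close>)
      also have "\<dots> = 1/2 * (Wt (1/2 * E) (subtree_gen (yinv a) t) * E)" by (simp add: E_def)
      also have "\<dots> \<le> 1/2 * E ^ n" using W tn by simp
      finally show "norm (yinv a (Some t)) \<le> 1/2 * E ^ n" .
    qed
  qed
  show ?thesis unfolding tame_def using main E
    by (intro conjI exI[of _ "1/2"] exI[of _ E]) auto
qed

lemma tame_bunit: "tame (bunit :: tree option \<Rightarrow> 'k::real_normed_field)"
  unfolding tame_def by (intro conjI exI[of _ 1]) auto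

lemma BTM_simps [simp]:
  "carrier BTM = {a. tame a}" "mult BTM = bprod" "one BTM = bunit"
  by (simp_all add: BTM_def)

lemma group_BTM: "group (BTM :: (tree option \<Rightarrow> 'k::real_normed_field) monoid)"
proof (rule groupI)
  fix x y z :: "tree option \<Rightarrow> 'k"
  show "x \<in> carrier BTM \<Longrightarrow> y \<in> carrier BTM \<Longrightarrow> x \<otimes>\<^bsub>BTM\<^esub> y \<in> carrier BTM"
    by (simp add: tame_bprod)
  show "x \<in> carrier BTM \<Longrightarrow> y \<in> carrier BTM \<Longrightarrow> z \<in> carrier BTM \<Longrightarrow>
      x \<otimes>\<^bsub>BTM\<^esub> y \<otimes>\<^bsub>BTM\<^esub> z = x \<otimes>\<^bsub>BTM\<^esub> (y \<otimes>\<^bsub>BTM\<^esub> z)"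
    by (simp add: bprod_assoc tame_def)
  show "x \<in> carrier BTM \<Longrightarrow> \<one>\<^bsub>BTM\<^esub> \<otimes>\<^bsub>BTM\<^esub> x = x"
    by (simp add: bprod_bunit_left)
  show "x \<in> carrier BTM \<Longrightarrow> \<exists>y\<in>carrier BTM. y \<otimes>\<^bsub>BTM\<^esub> x = \<one>\<^bsub>BTM\<^esub>"
  proof (rule bexI[of _ "yinv x"])
    assume "x \<in> carrier BTM"
    then show "yinv x \<in> carrier BTM" using tame_yinv[of x] by simp
    show "yinv x \<otimes>\<^bsub>BTM\<^esub> x = \<one>\<^bsub>BTM\<^esub>" using yinv_left[of x] \<open>x \<in> carrier BTM\<close>
      by (simp add: tame_def)
  qed
qed (simp add: tame_bunit)

lemma agree_le_refl: "agree_le m a a" by (simp add: agree_le_def)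
lemma agree_le_sym: "agree_le m a b \<Longrightarrow> agree_le m b a" by (simp add: agree_le_def)
lemma agree_le_trans: "agree_le m a b \<Longrightarrow> agree_le m b c \<Longrightarrow> agree_le m a c" by (simp add: agree_le_def)

lemma Ksub_agree: "Ksub n = {a \<in> carrier BTM. agree_le n a bunit}"
  by (auto simp: Ksub_def agree_le_def)

lemma normal_Ksub: "Ksub n \<lhd> (BTM :: (tree option \<Rightarrow> 'k::real_normed_field) monoid)"
proof -
  interpret G: group "BTM :: (tree option \<Rightarrow> 'k) monoid" by (rule group_BTM)
  have one1: "a None = 1" if "a \<in> carrier BTM" for a :: "tree option \<Rightarrow> 'k"
    using that by (simp add: tame_def)
  have sub: "subgroup (Ksub n) (BTM :: (tree option \<Rightarrow> 'k) monoid)"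
  proof (rule G.subgroupI)
    show "Ksub n \<subseteq> carrier BTM" by (auto simp: Ksub_agree)
    show "Ksub n \<noteq> {}" using tame_bunit by (auto simp: Ksub_agree agree_le_refl)
  next
    fix h :: "tree option \<Rightarrow> 'k" assume h: "h \<in> Ksub n"
    then have hc: "h \<in> carrier BTM" and ha: "agree_le n h bunit" by (auto simp: Ksub_agree)
    have ic: "inv\<^bsub>BTM\<^esub> h \<in> carrier BTM" by (rule G.inv_closed[OF hc])
    have "agree_le n (bprod (inv\<^bsub>BTM\<^esub> h) bunit) (bprod (inv\<^bsub>BTM\<^esub> h) h)"
      by (rule bprod_cong) (simp_all add: agree_le_refl agree_le_sym[OF ha] one1[OF hc])
    moreover have "bprod (inv\<^bsub>BTM\<^esub> h) bunit = inv\<^bsub>BTM\<^esub> h"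
      using G.r_one[OF ic] by simp
    moreover have "bprod (inv\<^bsub>BTM\<^esub> h) h = bunit"
      using G.l_inv[OF hc] by simp
    ultimately show "inv\<^bsub>BTM\<^esub> h \<in> Ksub n" using ic by (simp add: Ksub_agree)
  next
    fix a b :: "tree option \<Rightarrow> 'k" assume "a \<in> Ksub n" "b \<in> Ksub n"
    then have c: "a \<in> carrier BTM" "b \<in> carrier BTM" "agree_le n a bunit" "agree_le n b bunit"
      by (auto simp: Ksub_agree)
    have "agree_le n (bprod a b) (bprod bunit bunit)"
      by (rule bprod_cong) (simp_all add: c one1[OF c(2)])
    then show "a \<otimes>\<^bsub>BTM\<^esub> b \<in> Ksub n"
      using c tame_bprod by (simp add: Ksub_agree bprod_bunit_left)
  qed
  show ?thesis
    unfolding G.normal_inv_iff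
  proof (intro conjI sub ballI)
    fix x h :: "tree option \<Rightarrow> 'k" assume x: "x \<in> carrier BTM" and h: "h \<in> Ksub n"
    then have hc: "h \<in> carrier BTM" and ha: "agree_le n h bunit" by (auto simp: Ksub_agree)
    have ic: "inv\<^bsub>BTM\<^esub> x \<in> carrier BTM" by (rule G.inv_closed[OF x])
    have 1: "agree_le n (bprod x h) (bprod x bunit)"
      by (rule bprod_cong) (simp_all add: agree_le_refl ha one1[OF hc])
    have 2: "agree_le n (bprod (bprod x h) (inv\<^bsub>BTM\<^esub> x)) (bprod (bprod x bunit) (inv\<^bsub>BTM\<^esub> x))"
      by (rule bprod_cong[OF 1]) (simp_all add: agree_le_refl)
    have 3: "bprod (bprod x bunit) (inv\<^bsub>BTM\<^esub> x) = bunit"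
      using G.r_one[OF x] G.r_inv[OF x] by simp
    have "x \<otimes>\<^bsub>BTM\<^esub> h \<otimes>\<^bsub>BTM\<^esub> inv\<^bsub>BTM\<^esub> x \<in> carrier BTM" using x hc ic by (simp add: tame_bprod)
    then show "x \<otimes>\<^bsub>BTM\<^esub> h \<otimes>\<^bsub>BTM\<^esub> inv\<^bsub>BTM\<^esub> x \<in> Ksub n"
      using 2 3 by (simp add: Ksub_agree)
  qed
qed

lemma size_le_msize: "size M \<le> msize M"
proof (induction M)
  case (add x M) then show ?case using tsize_pos[of x] by simp
qed simp

lemma finite_trees: "finite {t. tsize t \<le> n}"
proof (induction n)
  case 0
  have "tsize t \<noteq> 0" for t using tsize_pos[of t] by linarith
  then have "{t. tsize t \<le> 0} = {}" by auto
  then show ?case by (metis finite.emptyI)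
next
  case (Suc n)
  let ?T = "{t. tsize t \<le> n}"
  have fin: "finite {M. set_mset M \<subseteq> ?T \<and> size M \<le> n}"
  proof -
    have "{M. set_mset M \<subseteq> ?T \<and> size M \<le> n} = (\<Union>j\<le>n. multisets_of_size ?T j)"
      by (auto simp: multisets_of_size_def)
    then show ?thesis using Suc by auto
  qed
  have "{t. tsize t \<le> Suc n} \<subseteq> Node ` {M. set_mset M \<subseteq> ?T \<and> size M \<le> n}"
  proof
    fix t assume "t \<in> {t. tsize t \<le> Suc n}"
    then obtain M where t: "t = Node M" "msize M \<le> n" by (cases t) auto
    have "set_mset M \<subseteq> ?T"
    proof
      fix c assume "c \<in># M"
      then have "tsize c < tsize (Node M)" by (rule tsize_child)
      then show "c \<in> ?T" using t by simp
    qed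
    moreover have "size M \<le> n" using size_le_msize[of M] t by simp
    ultimately show "t \<in> Node ` {M. set_mset M \<subseteq> ?T \<and> size M \<le> n}" using t by auto
  qed
  then show ?case using fin finite_subset by blast
qed

lemma bdd_range_iff: "bdd_above (range f) \<longleftrightarrow> (\<exists>M. \<forall>t. f t \<le> M)"
  by (auto simp: bdd_above_def)

lemma inE_mono:
  fixes x :: "tree option \<Rightarrow> 'k::real_normed_field"
  assumes "inE k x" "k \<le> k'"
  shows "inE k' x"
proof -
  obtain B where B: "\<And>t. norm (x (Some t)) / 2 ^ (k * tsize t) \<le> B"
    using assms(1) by (auto simp: inE_def bdd_range_iff)
  have "norm (x (Some t)) / 2 ^ (k' * tsize t) \<le> B" for t
  proof -
    have "(2::real) ^ (k * tsize t) \<le> 2 ^ (k' * tsize t)"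
      using assms(2) by (intro power_increasing) auto
    then have "norm (x (Some t)) / 2 ^ (k' * tsize t) \<le> norm (x (Some t)) / 2 ^ (k * tsize t)"
      by (intro divide_left_mono) auto
    then show ?thesis using B[of t] by linarith
  qed
  then show ?thesis using assms(1) by (auto simp: inE_def bdd_range_iff)
qed

lemma inE_add:
  fixes x y :: "tree option \<Rightarrow> 'k::real_normed_field"
  assumes "inE k x" "inE k y"
  shows "inE k (\<lambda>t. x t + y t)"
proof -
  obtain B where B: "\<And>t. norm (x (Some t)) / 2 ^ (k * tsize t) \<le> B"
    using assms(1) by (auto simp: inE_def bdd_range_iff)
  obtain B' where B': "\<And>t. norm (y (Some t)) / 2 ^ (k * tsize t) \<le> B'"
    using assms(2) by (auto simp: inE_def bdd_range_iff)
  have "norm (x (Some t) + y (Some t)) / 2 ^ (k * tsize t) \<le> B + B'" for t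
  proof -
    have "norm (x (Some t) + y (Some t)) / 2 ^ (k * tsize t)
        \<le> (norm (x (Some t)) + norm (y (Some t))) / 2 ^ (k * tsize t)"
      by (intro divide_right_mono norm_triangle_ineq) auto
    also have "\<dots> = norm (x (Some t)) / 2 ^ (k * tsize t) + norm (y (Some t)) / 2 ^ (k * tsize t)"
      by (simp add: add_divide_distrib)
    finally show ?thesis using B[of t] B'[of t] by linarith
  qed
  then show ?thesis using assms by (auto simp: inE_def bdd_range_iff)
qed

lemma inE_minus:
  fixes x :: "tree option \<Rightarrow> 'k::real_normed_field"
  assumes "inE k x"
  shows "inE k (\<lambda>t. c * x t)"
proof -
  obtain B where B: "\<And>t. norm (x (Some t)) / 2 ^ (k * tsize t) \<le> B"
    using assms(1) by (auto simp: inE_def bdd_range_iff)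
  have "norm (c * x (Some t)) / 2 ^ (k * tsize t) \<le> norm c * B" for t
    using mult_left_mono[OF B[of t], of "norm c"] by (simp add: norm_mult)
  then show ?thesis using assms by (auto simp: inE_def bdd_range_iff)
qed

lemma inE_dom:
  fixes x y :: "tree option \<Rightarrow> 'k::real_normed_field"
  assumes "inE k x" "y None = 0" "\<And>t. norm (y (Some t)) \<le> norm (x (Some t))"
  shows "inE k y"
proof -
  obtain B where B: "\<And>t. norm (x (Some t)) / 2 ^ (k * tsize t) \<le> B"
    using assms(1) by (auto simp: inE_def bdd_range_iff)
  have "norm (y (Some t)) / 2 ^ (k * tsize t) \<le> B" for t
    using B[of t] divide_right_mono[OF assms(3)[of t], of "2 ^ (k * tsize t)"] by simp
  then show ?thesis using assms by (auto simp: inE_def bdd_range_iff)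
qed

lemma chart_Ksub: "chart ` (Ksub n :: (tree option \<Rightarrow> 'k::real_normed_field) set) = Vsub n"
proof
  show "chart ` Ksub n \<subseteq> (Vsub n :: (tree option \<Rightarrow> 'k) set)"
  proof
    fix y :: "tree option \<Rightarrow> 'k" assume "y \<in> chart ` Ksub n"
    then obtain a where a: "a \<in> Ksub n" "y = chart a" by auto
    then have ta: "tame a" and az: "\<forall>t. tsize t \<le> n \<longrightarrow> a (Some t) = 0" by (auto simp: Ksub_def)
    obtain C K where CK: "C > 0" "K > 0" "\<And>t. norm (a (Some t)) \<le> C * K ^ tsize t" "a None = 1"
      using ta unfolding tame_def by blast
    obtain k where k: "K < 2 ^ k" using real_arch_pow[of 2 K] by auto
    have "norm (a (Some t)) / 2 ^ (k * tsize t) \<le> C" for t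
    proof -
      have "K ^ tsize t \<le> (2 ^ k) ^ tsize t" using k CK by (intro power_mono) auto
      then have "C * K ^ tsize t \<le> C * 2 ^ (k * tsize t)"
        using CK by (simp add: power_mult)
      then show ?thesis using CK(3)[of t] by (simp add: divide_le_eq)
    qed
    then have "inE k (chart a)" using CK(4) unfolding inE_def bdd_range_iff chart_def by auto
    moreover have "\<forall>t. tsize t \<le> n \<longrightarrow> chart a (Some t) = 0" using az by (simp add: chart_def)
    ultimately show "y \<in> Vsub n" unfolding a(2) Vsub_def Mstar_def by blast
  qed
next
  show "Vsub n \<subseteq> chart ` (Ksub n :: (tree option \<Rightarrow> 'k) set)"
  proof
    fix x :: "tree option \<Rightarrow> 'k" assume x: "x \<in> Vsub n"
    then obtain k where k: "inE k x" by (auto simp: Vsub_def Mstar_def)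
    obtain B where B: "\<And>t. norm (x (Some t)) / 2 ^ (k * tsize t) \<le> B"
      using k by (auto simp: inE_def bdd_range_iff)
    define a where "a = (\<lambda>y. x y + bunit y)"
    have "norm (a (Some t)) \<le> max B 1 * (2 ^ k) ^ tsize t" for t
    proof -
      have "norm (x (Some t)) \<le> B * 2 ^ (k * tsize t)" using B[of t] by (simp add: divide_le_eq)
      also have "\<dots> \<le> max B 1 * 2 ^ (k * tsize t)" by (intro mult_right_mono) auto
      finally show ?thesis by (simp add: a_def power_mult)
    qed
    moreover have "a None = 1" using k by (simp add: a_def inE_def)
    ultimately have "tame a" unfolding tame_def
      by (intro conjI exI[of _ "max B 1"] exI[of _ "2 ^ k"]) auto
    moreover have "\<forall>t. tsize t \<le> n \<longrightarrow> a (Some t) = 0" using x by (simp add: Vsub_def a_def)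
    ultimately have aK: "a \<in> Ksub n" by (simp add: Ksub_def)
    have "x = chart a" by (simp add: a_def chart_def)
    then show "x \<in> chart ` Ksub n" using aK by (rule image_eqI)
  qed
qed

lemma Vsub_Mstar: "Vsub n \<subseteq> Mstar" by (auto simp: Vsub_def)

lemma closed_Vsub: "ind_closed (Vsub n :: (tree option \<Rightarrow> 'k::real_normed_field) set)"
  unfolding ind_closed_def ind_open_def
proof (intro conjI Vsub_Mstar allI ballI impI Diff_subset)
  fix k and x :: "tree option \<Rightarrow> 'k"
  assume x: "x \<in> Mstar - Vsub n" and xk: "inE k x"
  then obtain t0 where t0: "tsize t0 \<le> n" "x (Some t0) \<noteq> 0" by (auto simp: Vsub_def)
  define \<epsilon> where "\<epsilon> = norm (x (Some t0)) / 2 ^ (k * tsize t0)"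
  have "\<epsilon> > 0" using t0 by (simp add: \<epsilon>_def)
  moreover have "y \<in> Mstar - Vsub n" if y: "inE k y" "wnorm k (\<lambda>t. y t - x t) < \<epsilon>" for y
  proof -
    have "inE k (\<lambda>t. y t + (-1) * x t)" by (intro inE_add inE_minus y xk)
    then have bd: "bdd_above (range (\<lambda>t. norm (y (Some t) - x (Some t)) / 2 ^ (k * tsize t)))"
      by (simp add: inE_def)
    have "norm (y (Some t0) - x (Some t0)) / 2 ^ (k * tsize t0) \<le> wnorm k (\<lambda>t. y t - x t)"
      unfolding wnorm_def by (rule cSUP_upper[OF _ bd]) simp
    then have "norm (y (Some t0) - x (Some t0)) / 2 ^ (k * tsize t0) < norm (x (Some t0)) / 2 ^ (k * tsize t0)"
      using y(2) by (simp add: \<epsilon>_def)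
    then have "norm (y (Some t0) - x (Some t0)) < norm (x (Some t0))"
      by (simp add: divide_less_cancel)
    then have "y (Some t0) \<noteq> 0" by auto
    then show ?thesis using y t0 by (auto simp: Mstar_def Vsub_def)
  qed
  ultimately show "\<exists>\<epsilon>>0. \<forall>y. inE k y \<and> wnorm k (\<lambda>t. y t - x t) < \<epsilon> \<longrightarrow> y \<in> Mstar - Vsub n"
    by blast
qed

lemma inE_zero: "inE k (\<lambda>_. 0 :: 'k::real_normed_field)"
  by (auto simp: inE_def bdd_range_iff)

lemma klinear_Vsub: "klinear_subspace (Vsub n :: (tree option \<Rightarrow> 'k::real_normed_field) set)"
  unfolding klinear_subspace_def
proof (intro conjI ballI allI)
  show "(\<lambda>_. 0) \<in> (Vsub n :: (tree option \<Rightarrow> 'k) set)"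
    using inE_zero by (auto simp: Vsub_def Mstar_def)
next
  fix x y :: "tree option \<Rightarrow> 'k" assume x: "x \<in> Vsub n" and y: "y \<in> Vsub n"
  obtain k where k: "inE k x" using x by (auto simp: Vsub_def Mstar_def)
  obtain k' where k': "inE k' y" using y by (auto simp: Vsub_def Mstar_def)
  have "inE (max k k') (\<lambda>t. x t + y t)"
    by (intro inE_add inE_mono[OF k] inE_mono[OF k']) auto
  then show "(\<lambda>t. x t + y t) \<in> Vsub n" using x y by (auto simp: Vsub_def Mstar_def)
next
  fix c :: 'k and x :: "tree option \<Rightarrow> 'k" assume x: "x \<in> Vsub n"
  obtain k where k: "inE k x" using x by (auto simp: Vsub_def Mstar_def)
  have "inE k (\<lambda>t. c * x t)" by (rule inE_minus[OF k])
  then show "(\<lambda>t. c * x t) \<in> Vsub n" using x by (auto simp: Vsub_def Mstar_def)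
qed

definition delta :: "tree \<Rightarrow> tree option \<Rightarrow> 'k::real_normed_field" where
  "delta s = (\<lambda>x. if x = Some s then 1 else 0)"

lemma delta_Mstar: "(delta s :: tree option \<Rightarrow> 'k::real_normed_field) \<in> Mstar"
proof -
  have "norm (delta s (Some t) :: 'k) / 2 ^ (0 * tsize t) \<le> 1" for t
    by (simp add: delta_def)
  then have "inE 0 (delta s :: tree option \<Rightarrow> 'k)"
    unfolding inE_def bdd_range_iff by (auto simp: delta_def)
  then show ?thesis by (auto simp: Mstar_def)
qed

lemma inj_delta: "inj (delta :: tree \<Rightarrow> tree option \<Rightarrow> 'k::real_normed_field)"
proof
  fix s t assume "(delta s :: tree option \<Rightarrow> 'k) = delta t"
  then have "(delta s :: tree option \<Rightarrow> 'k) (Some s) = delta t (Some s)" by simp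
  then show "s = t" by (simp add: delta_def split: if_splits)
qed

lemma sum_delta_eval:
  fixes c :: "tree \<Rightarrow> 'k::real_normed_field"
  assumes "finite T"
  shows "(\<Sum>s\<in>T. c s * delta s y) = (case y of None \<Rightarrow> 0 | Some t \<Rightarrow> if t \<in> T then c t else 0)"
proof (cases y)
  case None then show ?thesis by (simp add: delta_def)
next
  case (Some t)
  have "(\<Sum>s\<in>T. c s * delta s y) = (\<Sum>s\<in>T. if t = s then c s else 0)"
    by (rule sum.cong) (auto simp: delta_def Some)
  also have "\<dots> = (if t \<in> T then c t else 0)" using assms by (simp add: sum.delta)
  finally show ?thesis by (simp add: Some)
qed

lemma split_Vsub: "split_fin_codim (Vsub n :: (tree option \<Rightarrow> 'k::real_normed_field) set)"
proof -
  let ?T = "{t. tsize t \<le> n}"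
  let ?B = "(delta :: tree \<Rightarrow> tree option \<Rightarrow> 'k) ` ?T"
  have finT: "finite ?T" by (rule finite_trees)
  have injT: "inj_on (delta :: tree \<Rightarrow> tree option \<Rightarrow> 'k) ?T" using inj_delta by (rule inj_on_subset) simp
  have kspan_eval: "(\<lambda>t. \<Sum>b\<in>?B. c b * b t) = (\<lambda>y. case y of None \<Rightarrow> 0 | Some t \<Rightarrow> if t \<in> ?T then c (delta t) else 0)"
    for c :: "(tree option \<Rightarrow> 'k) \<Rightarrow> 'k"
  proof
    fix y
    show "(\<Sum>b\<in>?B. c b * b y) = (case y of None \<Rightarrow> 0 | Some t \<Rightarrow> if t \<in> ?T then c (delta t) else 0)"
      using sum_delta_eval[OF finT, of "\<lambda>s. c (delta s)" y] by (simp add: sum.reindex[OF injT])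
  qed
  have inter: "Vsub n \<inter> kspan ?B = {\<lambda>_. 0}"
  proof
    show "{\<lambda>_. 0} \<subseteq> Vsub n \<inter> kspan ?B"
    proof -
      have "(\<lambda>_. 0) \<in> (Vsub n :: (tree option \<Rightarrow> 'k) set)"
        using klinear_Vsub unfolding klinear_subspace_def by blast
      moreover have "(\<lambda>_. 0) \<in> kspan ?B"
        unfolding kspan_def by (rule CollectI, rule exI[of _ "\<lambda>_. 0"]) simp
      ultimately show ?thesis by auto
    qed
  next
    show "Vsub n \<inter> kspan ?B \<subseteq> {\<lambda>_. 0}"
    proof
      fix w assume w: "w \<in> Vsub n \<inter> kspan ?B"
      then obtain c where c: "w = (\<lambda>t. \<Sum>b\<in>?B. c b * b t)" by (auto simp: kspan_def)
      have "w y = 0" for y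
      proof (cases y)
        case None then show ?thesis by (simp add: c kspan_eval)
      next
        case (Some t)
        show ?thesis
        proof (cases "tsize t \<le> n")
          case True then show ?thesis using w Some by (auto simp: Vsub_def)
        next
          case False then show ?thesis by (simp add: c kspan_eval Some)
        qed
      qed
      then show "w \<in> {\<lambda>_. 0}" by auto
    qed
  qed
  have decomp: "\<exists>v\<in>Vsub n. \<exists>w\<in>kspan ?B. x = (\<lambda>t. v t + w t)" if x: "x \<in> Mstar" for x
  proof -
    define c where "c = (\<lambda>b :: tree option \<Rightarrow> 'k. x (SOME y. b y = 1))"
    have cd: "c (delta s) = x (Some s)" for s
    proof -
      have "(SOME y. (delta s :: tree option \<Rightarrow> 'k) y = 1) = Some s"
        by (rule some_equality) (auto simp: delta_def split: if_splits)
      then show ?thesis by (simp add: c_def)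
    qed
    define w where "w = (\<lambda>t. \<Sum>b\<in>?B. c b * b t)"
    have wk: "w \<in> kspan ?B" by (auto simp: kspan_def w_def)
    have wev: "w y = (case y of None \<Rightarrow> 0 | Some t \<Rightarrow> if tsize t \<le> n then x (Some t) else 0)" for y
      unfolding w_def kspan_eval by (simp add: cd split: option.splits)
    define v where "v = (\<lambda>t. x t - w t)"
    obtain k where k: "inE k x" using x by (auto simp: Mstar_def)
    have x0: "x None = 0" using k by (simp add: inE_def)
    have "inE k v"
      by (rule inE_dom[OF k]) (auto simp: v_def wev x0)
    moreover have "\<forall>t. tsize t \<le> n \<longrightarrow> v (Some t) = 0" by (simp add: v_def wev)
    ultimately have "v \<in> Vsub n" by (auto simp: Vsub_def Mstar_def)
    moreover have "x = (\<lambda>t. v t + w t)" by (simp add: v_def)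
    ultimately show ?thesis using wk by blast
  qed
  show ?thesis
    unfolding split_fin_codim_def
  proof (intro conjI klinear_Vsub Vsub_Mstar closed_Vsub exI[of _ ?B])
    show "finite ?B" using finT by simp
    show "?B \<subseteq> Mstar" using delta_Mstar by auto
    show "Vsub n \<inter> kspan ?B = {\<lambda>_. 0}" by (rule inter)
    show "\<forall>x\<in>Mstar. \<exists>v\<in>Vsub n. \<exists>w\<in>kspan ?B. x = (\<lambda>t. v t + w t)" using decomp by blast
  qed
qed

theorem proposition2p10:
  fixes n :: nat
  shows "normal (Ksub n :: (tree option \<Rightarrow> complex) set) BTM
       \<and> chart ` (Ksub n :: (tree option \<Rightarrow> complex) set) = Vsub n
       \<and> ind_closed (chart ` (Ksub n :: (tree option \<Rightarrow> complex) set))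
       \<and> split_fin_codim (Vsub n :: (tree option \<Rightarrow> complex) set)
       \<and> normal (Ksub n :: (tree option \<Rightarrow> real) set) BTM
       \<and> chart ` (Ksub n :: (tree option \<Rightarrow> real) set) = Vsub n
       \<and> ind_closed (chart ` (Ksub n :: (tree option \<Rightarrow> real) set))
       \<and> split_fin_codim (Vsub n :: (tree option \<Rightarrow> real) set)"
  by (simp add: normal_Ksub chart_Ksub closed_Vsub split_Vsub)

end
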